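(* Assume Assumption A. Let $\mathbb B^s=\{(\eta,\xi):\eta\ne\xi,\ (\eta,\xi)\in\mathbb B\text{ or }(\xi,\eta)\in\mathbb B\}$ and $c^s_N(\eta,\xi)=\tfrac12\{\mu_N(\eta)R_N(\eta,\xi)+\mu_N(\xi)R_N(\xi,\eta)\}$. Then the family of sequences $(c^s_N(\eta,\xi))_{N\ge1}$, $(\eta,\xi)\in\mathbb B^s$, is ordered.
   Context: Setting: $E$ is a fixed finite set; for each $N\ge1$, $(\eta^N_t)$ is a continuous-time irreducible Markov chain on $E$ with jump rates $R_N(\eta,\xi)$ and unique invariant probability measure $\mu_N$. Ordered families: a finite family of sequences of positive reals $(a^r_N)_{N\ge1}$, $r\in\mathfrak R$, is ordered if for all $r\neq s$ the sequence $\arctan(a^r_N/a^s_N)$ converges as $N\to\infty$. Assumption A: (i) for each $\eta\neq\xi$, either $R_N(\eta,\xi)=0$ for all $N$ or $R_N(\eta,\xi)>0$ for all $N$; let $\mathbb B=\{(\eta,\xi):\eta\ne\xi,R_N(\eta,\xi)>0\}$. (ii) For every $m\ge1$ the family $\prod_{(\eta,\xi)\in\mathbb B}R_N(\eta,\xi)^{k(\eta,\xi)}$, indexed by $k:\mathbb B\to\mathbb Z_+$ with $\sum k=m$, is ordered. *)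

theory Defs
  imports "HOL-Analysis.Analysis"
begin

definition ordered_family :: "'i set \<Rightarrow> ('i \<Rightarrow> nat \<Rightarrow> real) \<Rightarrow> bool" where
  "ordered_family I a \<longleftrightarrow> finite I \<and>
     (\<forall>r\<in>I. \<forall>N\<ge>1. a r N > 0) \<and>
     (\<forall>r\<in>I. \<forall>s\<in>I. r \<noteq> s \<longrightarrow> convergent (\<lambda>N. arctan (a r N / a s N)))"

definition rate_matrix :: "('a::finite \<Rightarrow> 'a \<Rightarrow> real) \<Rightarrow> bool" where
  "rate_matrix R \<longleftrightarrow> (\<forall>x y. x \<noteq> y \<longrightarrow> R x y \<ge> 0)"

definition irreducible_chain :: "('a::finite \<Rightarrow> 'a \<Rightarrow> real) \<Rightarrow> bool" where
  "irreducible_chain R \<longleftrightarrow> (\<forall>x y. (x, y) \<in> {(u, v). u \<noteq> v \<and> R u v > 0}\<^sup>*)"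

text \<open>Invariant probability measure: \<mu> L = 0, i.e. total inflow equals total outflow.\<close>
definition invariant_prob :: "('a::finite \<Rightarrow> 'a \<Rightarrow> real) \<Rightarrow> ('a \<Rightarrow> real) \<Rightarrow> bool" where
  "invariant_prob R \<mu> \<longleftrightarrow> (\<forall>x. \<mu> x \<ge> 0) \<and> (\<Sum>x\<in>UNIV. \<mu> x) = 1 \<and>
     (\<forall>y. (\<Sum>x\<in>UNIV - {y}. \<mu> x * R x y) = \<mu> y * (\<Sum>z\<in>UNIV - {y}. R y z))"

text \<open>The set \<bbbB> of allowed jumps (determined by N = 1 under Assumption A(i)).\<close>
definition jumps :: "(nat \<Rightarrow> 'a \<Rightarrow> 'a \<Rightarrow> real) \<Rightarrow> ('a \<times> 'a) set" where
  "jumps R = {(x, y). x \<noteq> y \<and> R 1 x y > 0}"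

definition assumption_A :: "(nat \<Rightarrow> 'a::finite \<Rightarrow> 'a \<Rightarrow> real) \<Rightarrow> bool" where
  "assumption_A R \<longleftrightarrow>
     (\<forall>x y. x \<noteq> y \<longrightarrow> (\<forall>N\<ge>1. R N x y = 0) \<or> (\<forall>N\<ge>1. R N x y > 0)) \<and>
     (\<forall>m::nat\<ge>1. ordered_family
        {k :: 'a \<times> 'a \<Rightarrow> nat. (\<forall>e. e \<notin> jumps R \<longrightarrow> k e = 0) \<and> (\<Sum>e\<in>jumps R. k e) = m}
        (\<lambda>k N. \<Prod>e\<in>jumps R. R N (fst e) (snd e) ^ k e))"

definition sym_jumps :: "(nat \<Rightarrow> 'a \<Rightarrow> 'a \<Rightarrow> real) \<Rightarrow> ('a \<times> 'a) set" where
  "sym_jumps R = {(x, y). x \<noteq> y \<and> ((x, y) \<in> jumps R \<or> (y, x) \<in> jumps R)}"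

definition sym_cond :: "(nat \<Rightarrow> 'a \<Rightarrow> 'a \<Rightarrow> real) \<Rightarrow> (nat \<Rightarrow> 'a \<Rightarrow> real) \<Rightarrow> nat \<Rightarrow> 'a \<Rightarrow> 'a \<Rightarrow> real" where
  "sym_cond R \<mu> N x y = (\<mu> N x * R N x y + \<mu> N y * R N y x) / 2"

end

theory Submission
  imports Defs
begin


definition reach :: "('a \<Rightarrow> 'a) \<Rightarrow> 'a \<Rightarrow> 'a \<Rightarrow> bool" where
  "reach g u v \<longleftrightarrow> (\<exists>k. (g^^k) u = v)"

definition trees :: "'a \<Rightarrow> ('a \<Rightarrow> 'a) set" where
  "trees x = {f. f x = x \<and> (\<forall>v. reach f v x)}"

definition cyc :: "'a \<Rightarrow> ('a \<Rightarrow> 'a) set" where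
  "cyc y = {g. (\<forall>v. g v \<noteq> v) \<and> (\<forall>v. reach g v y)}"

lemma reach_refl: "reach g u u"
  unfolding reach_def by (rule exI[of _ 0]) simp

lemma reach_step: "reach g (g u) v \<Longrightarrow> reach g u v"
  unfolding reach_def
proof -
  assume "\<exists>k. (g ^^ k) (g u) = v"
  then obtain k where "(g ^^ k) (g u) = v" by blast
  then have "(g ^^ Suc k) u = v" by (simp add: funpow_swap1)
  then show "\<exists>k. (g ^^ k) u = v" by blast
qed

lemma reach_trans: "reach g u v \<Longrightarrow> reach g v w \<Longrightarrow> reach g u w"
  unfolding reach_def
proof -
  assume "\<exists>k. (g ^^ k) u = v" "\<exists>k. (g ^^ k) v = w"
  then obtain k l where "(g ^^ k) u = v" "(g ^^ l) v = w" by blast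
  then have "(g ^^ (l + k)) u = w" by (simp add: funpow_add)
  then show "\<exists>k. (g ^^ k) u = w" by blast
qed

lemma agree_reach:
  assumes "\<And>w. w \<noteq> x \<Longrightarrow> g w = f w" and "reach f u x"
  shows "reach g u x"
proof -
  obtain k where "(f^^k) u = x" using assms(2) unfolding reach_def by blast
  then show ?thesis
  proof (induction k arbitrary: u)
    case 0 then show ?case by (simp add: reach_refl)
  next
    case (Suc k)
    show ?case
    proof (cases "u = x")
      case True then show ?thesis by (simp add: reach_refl)
    next
      case False
      have "(f^^k) (f u) = x" using Suc.prems by (simp add: funpow_swap1)
      then have "reach g (f u) x" by (rule Suc.IH)
      then show ?thesis using assms(1)[OF False] by (simp add: reach_step)
    qed
  qed
qed

lemma funpow_fix: "f x = x \<Longrightarrow> (f^^n) x = x"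
  by (induction n) auto

lemma tree_no_fix:
  assumes "f \<in> trees x" "v \<noteq> x" shows "f v \<noteq> v"
proof
  assume "f v = v"
  moreover obtain k where "(f^^k) v = x" using assms unfolding trees_def reach_def by blast
  ultimately show False using funpow_fix[of f v k] assms(2) by simp
qed

lemma tree_no_return:
  assumes "f \<in> trees x" "y \<noteq> x" "j > 0" shows "(f^^j) y \<noteq> y"
proof
  assume h: "(f^^j) y = y"
  have fx: "f x = x" using assms(1) unfolding trees_def by blast
  obtain k where k: "(f^^k) y = x" using assms unfolding trees_def reach_def by blast
  have jq: "(f^^(j*q)) y = y" for q
    using funpow_fix[of "f^^j" y q] h by (simp add: funpow_mult mult.commute)
  have "j * k = (j*k - k) + k" using assms(3) by (cases j) auto
  then have "(f^^(j*k)) y = (f^^(j*k - k)) ((f^^k) y)" by (metis comp_apply funpow_add)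
  also have "\<dots> = x" using k funpow_fix[of f x, OF fx] by simp
  finally show False using jq[of k] assms(2) by simp
qed

definition per :: "('a \<Rightarrow> 'a) \<Rightarrow> 'a \<Rightarrow> nat" where
  "per g y = (LEAST p. p > 0 \<and> (g^^p) y = y)"

definition pre :: "('a \<Rightarrow> 'a) \<Rightarrow> 'a \<Rightarrow> 'a" where
  "pre g y = (g^^(per g y - 1)) y"

lemma per_props:
  assumes "g \<in> cyc y"
  shows "per g y > 0" "(g^^per g y) y = y" "\<And>j. 0 < j \<Longrightarrow> j < per g y \<Longrightarrow> (g^^j) y \<noteq> y"
proof -
  obtain k where "(g^^k) (g y) = y" using assms unfolding cyc_def reach_def by blast
  then have ex: "Suc k > 0 \<and> (g^^Suc k) y = y" by (simp add: funpow_swap1)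
  show "per g y > 0" "(g^^per g y) y = y" using LeastI[of "\<lambda>p. p > 0 \<and> (g^^p) y = y", OF ex]
    unfolding per_def by auto
  show "\<And>j. 0 < j \<Longrightarrow> j < per g y \<Longrightarrow> (g^^j) y \<noteq> y"
    using not_less_Least[of _ "\<lambda>p. p > 0 \<and> (g^^p) y = y"] unfolding per_def by blast
qed

lemma pre_props:
  assumes "g \<in> cyc y"
  shows "g (pre g y) = y" "pre g y \<noteq> y"
proof -
  note P = per_props[OF assms]
  have "per g y = Suc (per g y - 1)" using P(1) by simp
  then have "(g^^per g y) y = g (pre g y)" unfolding pre_def by (metis comp_apply funpow.simps(2))
  then show "g (pre g y) = y" using P(2) by simp
  show "pre g y \<noteq> y"
  proof
    assume h: "pre g y = y"
    show False
    proof (cases "per g y - 1 = 0")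
      case True
      then have "g y = y" using \<open>g (pre g y) = y\<close> h by simp
      then show False using assms unfolding cyc_def by blast
    next
      case False
      then show False using P(3)[of "per g y - 1"] P(1) h unfolding pre_def by simp
    qed
  qed
qed

lemma pre_upd:
  assumes f: "f \<in> trees x" and xy: "x \<noteq> y"
  shows "pre (f(x:=y)) y = x"
proof -
  define g where "g = f(x:=y)"
  have "\<exists>d. (f^^d) y = x" using f unfolding trees_def reach_def by blast
  define d where "d = (LEAST d. (f^^d) y = x)"
  have fd: "(f^^d) y = x" unfolding d_def by (rule LeastI_ex) (rule \<open>\<exists>d. (f^^d) y = x\<close>)
  have lt: "j < d \<Longrightarrow> (f^^j) y \<noteq> x" for j unfolding d_def by (rule not_less_Least)
  have eq: "j \<le> d \<Longrightarrow> (g^^j) y = (f^^j) y" for j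
  proof (induction j)
    case 0 then show ?case by simp
  next
    case (Suc j)
    then have "(f^^j) y \<noteq> x" using lt by simp
    then show ?case using Suc by (simp add: g_def)
  qed
  have d0: "d > 0" using fd xy by (cases d) auto
  have gc: "g \<in> cyc y"
  proof -
    have "g v \<noteq> v" for v
      using tree_no_fix[OF f] xy unfolding g_def by (cases "v = x") auto
    moreover have "reach g v y" for v
    proof -
      have "reach f v x" using f unfolding trees_def by blast
      then have "reach g v x" by (rule agree_reach[rotated]) (simp add: g_def)
      moreover have "reach g x y" by (rule reach_step) (simp add: g_def reach_refl)
      ultimately show ?thesis by (rule reach_trans)
    qed
    ultimately show ?thesis unfolding cyc_def by blast
  qed
  note P = per_props[OF gc]
  have gsd: "(g^^Suc d) y = y" using eq[of d] fd by (simp add: g_def)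
  have "per g y \<le> Suc d" unfolding per_def by (rule Least_le) (use gsd in simp)
  moreover have "\<not> per g y \<le> d"
  proof
    assume "per g y \<le> d"
    then have "(g^^per g y) y = (f^^per g y) y" by (rule eq)
    then show False using P(1,2) tree_no_return[OF f xy[symmetric], of "per g y"]  by simp
  qed
  ultimately have "per g y = Suc d" by simp
  then show ?thesis unfolding g_def[symmetric] pre_def using eq[of d] fd by simp
qed

definition W :: "('a::finite \<Rightarrow> 'a \<Rightarrow> real) \<Rightarrow> 'a \<Rightarrow> real" where
  "W R x = (\<Sum>f\<in>trees x. \<Prod>v\<in>UNIV-{x}. R v (f v))"

lemma prod_upd: "(\<Prod>v\<in>UNIV. R v ((f(x:=y)) v)) = R x y * (\<Prod>v\<in>UNIV-{x}. R v (f v))"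
  for R :: "'a::finite \<Rightarrow> 'a \<Rightarrow> real"
proof -
  have "(\<Prod>v\<in>UNIV. R v ((f(x:=y)) v)) = R x y * (\<Prod>v\<in>UNIV-{x}. R v ((f(x:=y)) v))"
    by (subst prod.remove[of UNIV x]) auto
  also have "(\<Prod>v\<in>UNIV-{x}. R v ((f(x:=y)) v)) = (\<Prod>v\<in>UNIV-{x}. R v (f v))"
    by (rule prod.cong) auto
  finally show ?thesis .
qed

lemma W_mult: "W R x * R x y = (\<Sum>f\<in>trees x. \<Prod>v\<in>UNIV. R v ((f(x:=y)) v))"
  unfolding W_def sum_distrib_right prod_upd by (simp add: mult.commute)

lemma left_sum:
  fixes R :: "'a::finite \<Rightarrow> 'a \<Rightarrow> real"
  shows "(\<Sum>x\<in>UNIV-{y}. W R x * R x y) = (\<Sum>g\<in>cyc y. \<Prod>v\<in>UNIV. R v (g v))"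
proof -
  define h where "h = (\<lambda>(x::'a, f::'a\<Rightarrow>'a). f(x:=y))"
  define S where "S = Sigma (UNIV-{y}) trees"
  have bij: "bij_betw h S (cyc y)"
    unfolding bij_betw_def
  proof
    show "inj_on h S"
    proof (rule inj_onI)
      fix p q assume p: "p \<in> S" and q: "q \<in> S" and e: "h p = h q"
      obtain x f where pe: "p = (x,f)" by (cases p)
      obtain x' f' where qe: "q = (x',f')" by (cases q)
      have f: "f \<in> trees x" "x \<noteq> y" using p pe unfolding S_def by auto
      have f': "f' \<in> trees x'" "x' \<noteq> y" using q qe unfolding S_def by auto
      have ee: "f(x:=y) = f'(x':=y)" using e pe qe unfolding h_def by simp
      have "x = x'" using pre_upd[OF f(1) f(2)] pre_upd[OF f'(1) f'(2)] ee by simp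
      moreover have "f x = x" "f' x' = x'" using f f' unfolding trees_def by auto
      ultimately have "f = f'" using ee by (metis fun_upd_triv fun_upd_upd)
      then show "p = q" using pe qe \<open>x = x'\<close> by simp
    qed
    show "h ` S = cyc y"
    proof
      show "h ` S \<subseteq> cyc y"
      proof
        fix g assume "g \<in> h ` S"
        then obtain x f where f: "f \<in> trees x" "x \<noteq> y" and g: "g = f(x:=y)"
          unfolding S_def h_def by auto
        have "g v \<noteq> v" for v
          using tree_no_fix[OF f(1)] f(2) unfolding g by (cases "v = x") auto
        moreover have "reach g v y" for v
        proof -
          have "reach f v x" using f unfolding trees_def by blast
          then have "reach g v x" by (rule agree_reach[rotated]) (simp add: g)
          moreover have "reach g x y" by (rule reach_step) (simp add: g reach_refl)
          ultimately show ?thesis by (rule reach_trans)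
        qed
        ultimately show "g \<in> cyc y" unfolding cyc_def by blast
      qed
      show "cyc y \<subseteq> h ` S"
      proof
        fix g assume g: "g \<in> cyc y"
        define x where "x = pre g y"
        have gx: "g x = y" "x \<noteq> y" using pre_props[OF g] unfolding x_def by auto
        define f where "f = g(x:=x)"
        have "reach g y x" unfolding x_def pre_def reach_def by blast
        have "f \<in> trees x"
        proof -
          have "reach f v x" for v
          proof -
            have "reach g v y" using g unfolding cyc_def by blast
            then have "reach g v x" using \<open>reach g y x\<close> by (rule reach_trans)
            then show ?thesis by (rule agree_reach[rotated]) (simp add: f_def)
          qed
          then show ?thesis unfolding trees_def f_def by simp
        qed
        moreover have "g = h (x,f)" unfolding h_def f_def using gx by auto
        ultimately show "g \<in> h ` S" unfolding S_def using gx by blast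
      qed
    qed
  qed
  have "(\<Sum>x\<in>UNIV-{y}. W R x * R x y) = (\<Sum>x\<in>UNIV-{y}. \<Sum>f\<in>trees x. \<Prod>v\<in>UNIV. R v ((f(x:=y)) v))"
    by (simp add: W_mult)
  also have "\<dots> = (\<Sum>p\<in>S. \<Prod>v\<in>UNIV. R v (h p v))"
    unfolding S_def h_def by (subst sum.Sigma) (auto simp: case_prod_beta)
  also have "\<dots> = (\<Sum>g\<in>cyc y. \<Prod>v\<in>UNIV. R v (g v))"
    by (rule sum.reindex_bij_betw[OF bij])
  finally show ?thesis .
qed

lemma right_sum:
  fixes R :: "'a::finite \<Rightarrow> 'a \<Rightarrow> real"
  shows "W R y * (\<Sum>z\<in>UNIV-{y}. R y z) = (\<Sum>g\<in>cyc y. \<Prod>v\<in>UNIV. R v (g v))"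
proof -
  define h where "h = (\<lambda>(z::'a, f::'a\<Rightarrow>'a). f(y:=z))"
  define S where "S = (UNIV-{y}) \<times> trees y"
  have bij: "bij_betw h S (cyc y)"
    unfolding bij_betw_def
  proof
    show "inj_on h S"
    proof (rule inj_onI)
      fix p q assume p: "p \<in> S" and q: "q \<in> S" and e: "h p = h q"
      obtain z f where pe: "p = (z,f)" by (cases p)
      obtain z' f' where qe: "q = (z',f')" by (cases q)
      have "f y = y" "f' y = y" using p q pe qe unfolding S_def trees_def by auto
      moreover have ee: "f(y:=z) = f'(y:=z')" using e pe qe unfolding h_def by simp
      ultimately have "z = z'" "f = f'" by (metis fun_upd_same, metis fun_upd_triv fun_upd_upd)
      then show "p = q" using pe qe by simp
    qed
    show "h ` S = cyc y"
    proof
      show "h ` S \<subseteq> cyc y"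
      proof
        fix g assume "g \<in> h ` S"
        then obtain z f where f: "f \<in> trees y" "z \<noteq> y" and g: "g = f(y:=z)"
          unfolding S_def h_def by auto
        have "g v \<noteq> v" for v
          using tree_no_fix[OF f(1)] f(2) unfolding g by (cases "v = y") auto
        moreover have "reach g v y" for v
        proof -
          have "reach f v y" using f unfolding trees_def by blast
          then show "reach g v y" by (rule agree_reach[rotated]) (simp add: g)
        qed
        ultimately show "g \<in> cyc y" unfolding cyc_def by blast
      qed
      show "cyc y \<subseteq> h ` S"
      proof
        fix g assume g: "g \<in> cyc y"
        define f where "f = g(y:=y)"
        have "f \<in> trees y"
        proof -
          have "reach f v y" for v
          proof -
            have "reach g v y" using g unfolding cyc_def by blast
            then show ?thesis by (rule agree_reach[rotated]) (simp add: f_def)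
          qed
          then show ?thesis unfolding trees_def f_def by simp
        qed
        moreover have "g y \<noteq> y" using g unfolding cyc_def by blast
        moreover have "g = h (g y,f)" unfolding h_def f_def by auto
        ultimately show "g \<in> h ` S" unfolding S_def by blast
      qed
    qed
  qed
  have "W R y * (\<Sum>z\<in>UNIV-{y}. R y z) = (\<Sum>z\<in>UNIV-{y}. W R y * R y z)"
    by (simp add: sum_distrib_left)
  also have "\<dots> = (\<Sum>z\<in>UNIV-{y}. \<Sum>f\<in>trees y. \<Prod>v\<in>UNIV. R v ((f(y:=z)) v))"
    by (simp add: W_mult)
  also have "\<dots> = (\<Sum>p\<in>S. \<Prod>v\<in>UNIV. R v (h p v))"
    unfolding S_def h_def by (subst sum.Sigma) (auto simp: case_prod_beta)
  also have "\<dots> = (\<Sum>g\<in>cyc y. \<Prod>v\<in>UNIV. R v (g v))"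
    by (rule sum.reindex_bij_betw[OF bij])
  finally show ?thesis .
qed

lemma balance:
  fixes R :: "'a::finite \<Rightarrow> 'a \<Rightarrow> real"
  shows "(\<Sum>x\<in>UNIV-{y}. W R x * R x y) = W R y * (\<Sum>z\<in>UNIV-{y}. R y z)"
  using left_sum right_sum by metis

lemma finite_trees: "finite (trees (x::'a::finite))"
  by (rule finite_subset[of _ UNIV]) auto

lemma W_nonneg:
  fixes R :: "'a::finite \<Rightarrow> 'a \<Rightarrow> real"
  assumes nn: "\<And>u v. u \<noteq> v \<Longrightarrow> R u v \<ge> 0"
  shows "W R x \<ge> 0"
  unfolding W_def
proof (rule sum_nonneg, rule prod_nonneg)
  fix f v assume f: "f \<in> trees x" and v: "v \<in> UNIV - {x}"
  have "f v \<noteq> v" by (rule tree_no_fix[OF f]) (use v in simp)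
  then show "R v (f v) \<ge> 0" by (rule nn[of v "f v", OF not_sym])
qed

lemma W_pos:
  fixes R :: "'a::finite \<Rightarrow> 'a \<Rightarrow> real"
  assumes nn: "\<And>u v. u \<noteq> v \<Longrightarrow> R u v \<ge> 0" and irr: "irreducible_chain R"
  shows "W R r > 0"
proof -
  define E where "E = {(u, v). u \<noteq> v \<and> R u v > 0}"
  have ex: "\<exists>n. (v, r) \<in> E ^^ n" for v
  proof -
    have "(v, r) \<in> E\<^sup>*" using irr unfolding irreducible_chain_def E_def by blast
    then show ?thesis by (simp add: rtrancl_power)
  qed
  define d where "d v = (LEAST n. (v, r) \<in> E ^^ n)" for v
  have dv: "(v, r) \<in> E ^^ d v" for v unfolding d_def by (rule LeastI_ex) (rule ex)
  have dle: "(v, r) \<in> E ^^ n \<Longrightarrow> d v \<le> n" for v n unfolding d_def by (rule Least_le)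
  have d0: "d v \<noteq> 0" if "v \<noteq> r" for v
  proof
    assume "d v = 0"
    then have "(v, r) \<in> E ^^ 0" using dv[of v] by simp
    then show False using that by simp
  qed
  have step: "\<exists>u. (v, u) \<in> E \<and> (u, r) \<in> E ^^ (d v - 1)" if "v \<noteq> r" for v
  proof -
    have "Suc (d v - 1) = d v" using d0[OF that] by simp
    then have "(v, r) \<in> E ^^ Suc (d v - 1)" using dv[of v] by simp
    then show ?thesis by (rule relpow_Suc_D2)
  qed
  define f where "f v = (if v = r then r else SOME u. (v, u) \<in> E \<and> (u, r) \<in> E ^^ (d v - 1))" for v
  have fv: "(v, f v) \<in> E \<and> (f v, r) \<in> E ^^ (d v - 1)" if "v \<noteq> r" for v
  proof -
    have "f v = (SOME u. (v, u) \<in> E \<and> (u, r) \<in> E ^^ (d v - 1))" unfolding f_def using that by simp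
    then show ?thesis using someI_ex[OF step[OF that]] by simp
  qed
  have reach: "reach f v r" for v
  proof (induction "d v" arbitrary: v rule: less_induct)
    case less
    show ?case
    proof (cases "v = r")
      case True then show ?thesis by (simp add: reach_refl)
    next
      case False
      have "d (f v) \<le> d v - 1" using fv[OF False] dle by simp
      then have "d (f v) < d v" using d0[OF False] by simp
      then have "reach f (f v) r" by (rule less)
      then show ?thesis by (rule reach_step)
    qed
  qed
  have fr: "f r = r" unfolding f_def by simp
  have ft: "f \<in> trees r" unfolding trees_def using reach fr by simp
  have pos: "(\<Prod>v\<in>UNIV-{r}. R v (f v)) > 0"
  proof (rule prod_pos)
    fix v assume "v \<in> UNIV - {r}"
    then have "(v, f v) \<in> E" using fv by simp
    then show "R v (f v) > 0" unfolding E_def by simp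
  qed
  have "(\<Prod>v\<in>UNIV-{r}. R v (f v)) \<le> W R r"
    unfolding W_def
  proof (rule member_le_sum[OF ft _ finite_trees])
    fix g assume "g \<in> trees r - {f}"
    then have g: "g \<in> trees r" by simp
    show "0 \<le> (\<Prod>v\<in>UNIV-{r}. R v (g v))"
    proof (rule prod_nonneg)
      fix v assume v: "v \<in> UNIV - {r}"
      have "g v \<noteq> v" by (rule tree_no_fix[OF g]) (use v in simp)
      then show "R v (g v) \<ge> 0" by (rule nn[of v "g v", OF not_sym])
    qed
  qed
  with pos show ?thesis by linarith
qed



lemma tendsto_ev1:
  fixes X Y :: "nat \<Rightarrow> real"
  assumes "X \<longlonglongrightarrow> l" "\<And>N. N \<ge> 1 \<Longrightarrow> X N = Y N"
  shows "Y \<longlonglongrightarrow> l"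
  by (rule Lim_transform_eventually[OF assms(1)]) (use assms(2) in \<open>auto simp: eventually_sequentially\<close>)

lemma conv_ev1:
  fixes X Y :: "nat \<Rightarrow> real"
  assumes "convergent X" "\<And>N. N \<ge> 1 \<Longrightarrow> X N = Y N"
  shows "convergent Y"
  using assms tendsto_ev1 unfolding convergent_def by blast

lemma arctan_recip: "x > 0 \<Longrightarrow> arctan (1/x) = pi/2 - arctan x"
proof -
  assume "x > 0"
  moreover have "1/x = inverse x" by (simp add: inverse_eq_divide)
  ultimately show ?thesis using arctan_inverse[of x] by simp
qed

lemma ratio_total:
  fixes A B :: "nat \<Rightarrow> real"
  assumes pos: "\<And>N. N \<ge> 1 \<Longrightarrow> A N > 0" "\<And>N. N \<ge> 1 \<Longrightarrow> B N > 0"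
    and c: "convergent (\<lambda>N. arctan (A N / B N))"
  shows "convergent (\<lambda>N. A N / B N) \<or> convergent (\<lambda>N. B N / A N)"
proof -
  obtain L where L: "(\<lambda>N. arctan (A N / B N)) \<longlonglongrightarrow> L" using c unfolding convergent_def by blast
  have L0: "L \<ge> 0"
  proof (rule LIMSEQ_le_const[OF L])
    show "\<exists>N. \<forall>n\<ge>N. 0 \<le> arctan (A n / B n)"
      using pos by (intro exI[of _ 1]) (auto intro!: less_imp_le arctan_less_zero_iff[THEN iffD2] simp: arctan_le_zero_iff)
  qed
  have L1: "L \<le> pi/2"
  proof (rule LIMSEQ_le_const2[OF L])
    show "\<exists>N. \<forall>n\<ge>N. arctan (A n / B n) \<le> pi/2" using arctan_ubound less_imp_le by blast
  qed
  show ?thesis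
  proof (cases "L < pi/2")
    case True
    have "cos L \<noteq> 0" using cos_gt_zero_pi[of L] True L0 by simp
    then have "(\<lambda>N. tan (arctan (A N / B N))) \<longlonglongrightarrow> tan L"
      by (rule isCont_tendsto_compose[OF isCont_tan L])
    then have "convergent (\<lambda>N. A N / B N)" unfolding convergent_def tan_arctan by blast
    then show ?thesis by blast
  next
    case False
    then have Lp: "L = pi/2" using L1 by simp
    have "(\<lambda>N. pi/2 - arctan (A N / B N)) \<longlonglongrightarrow> pi/2 - L" by (intro tendsto_intros L)
    then have l0: "(\<lambda>N. pi/2 - arctan (A N / B N)) \<longlonglongrightarrow> 0" using Lp by simp
    have "(\<lambda>N. arctan (B N / A N)) \<longlonglongrightarrow> 0"
    proof (rule tendsto_ev1[OF l0])
      fix N :: nat assume "N \<ge> 1"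
      then have "A N / B N > 0" using pos by simp
      then show "pi/2 - arctan (A N / B N) = arctan (B N / A N)"
        using arctan_recip[of "A N / B N"] by simp
    qed
    then have "(\<lambda>N. tan (arctan (B N / A N))) \<longlonglongrightarrow> tan 0"
      by (rule isCont_tendsto_compose[OF isCont_tan[of 0, OF cos_zero[THEN ssubst, of "\<lambda>x. x \<noteq> 0", OF one_neq_zero]]])
    then have "convergent (\<lambda>N. B N / A N)" unfolding convergent_def tan_arctan by blast
    then show ?thesis by blast
  qed
qed


lemma ratio_self:
  fixes A :: "nat \<Rightarrow> real"
  assumes "\<And>N. N \<ge> 1 \<Longrightarrow> A N > 0"
  shows "(\<lambda>N. A N / A N) \<longlonglongrightarrow> 1"
  by (rule tendsto_ev1[OF tendsto_const]) (use assms in \<open>simp add: less_imp_neq[symmetric]\<close>)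

lemma ratio_trans:
  fixes A B C :: "nat \<Rightarrow> real"
  assumes "\<And>N. N \<ge> 1 \<Longrightarrow> B N > 0"
    and "convergent (\<lambda>N. A N / B N)" "convergent (\<lambda>N. B N / C N)"
  shows "convergent (\<lambda>N. A N / C N)"
proof -
  obtain l1 l2 where "(\<lambda>N. A N / B N) \<longlonglongrightarrow> l1" "(\<lambda>N. B N / C N) \<longlonglongrightarrow> l2"
    using assms(2,3) unfolding convergent_def by blast
  then have "(\<lambda>N. (A N / B N) * (B N / C N)) \<longlonglongrightarrow> l1 * l2" by (rule tendsto_mult)
  then have "(\<lambda>N. A N / C N) \<longlonglongrightarrow> l1 * l2"
    by (rule tendsto_ev1) (use assms(1) in \<open>simp add: less_imp_neq[symmetric]\<close>)
  then show ?thesis unfolding convergent_def by blast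
qed

lemma max_exists:
  assumes "finite S" "S \<noteq> {}" "\<And>a b. a \<in> S \<Longrightarrow> b \<in> S \<Longrightarrow> rel a b \<or> rel b a"
    "\<And>a b c. a \<in> S \<Longrightarrow> b \<in> S \<Longrightarrow> c \<in> S \<Longrightarrow> rel a b \<Longrightarrow> rel b c \<Longrightarrow> rel a c"
  shows "\<exists>m\<in>S. \<forall>k\<in>S. rel k m"
  using assms
proof (induction S rule: finite_ne_induct)
  case (singleton x) then show ?case by blast
next
  case (insert x F)
  have "\<exists>m\<in>F. \<forall>k\<in>F. rel k m"
    by (rule insert.IH) (use insert.prems in blast)+
  then obtain m where m: "m \<in> F" "\<forall>k\<in>F. rel k m" by blast
  show ?case
  proof (cases "rel x m")
    case True then show ?thesis using m by blast
  next
    case False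
    then have "rel m x" using insert.prems(1)[of x m] m by blast
    then have "\<forall>k\<in>insert x F. rel k x"
      using m insert.prems by blast
    then show ?thesis by blast
  qed
qed

lemma ord_ratio:
  fixes M :: "'k \<Rightarrow> nat \<Rightarrow> real"
  assumes of: "ordered_family K M"
    and a: "\<And>k. a k \<ge> 0" and b: "\<And>k. b k \<ge> 0"
    and P: "\<And>N. N \<ge> 1 \<Longrightarrow> P N = (\<Sum>k\<in>K. a k * M k N)"
    and Q: "\<And>N. N \<ge> 1 \<Longrightarrow> Q N = (\<Sum>k\<in>K. b k * M k N)"
    and Pp: "\<And>N. N \<ge> 1 \<Longrightarrow> P N > 0" and Qp: "\<And>N. N \<ge> 1 \<Longrightarrow> Q N > 0"
  shows "convergent (\<lambda>N. arctan (P N / Q N))"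
proof -
  have fin: "finite K" and Mp: "\<And>k N. k \<in> K \<Longrightarrow> N \<ge> 1 \<Longrightarrow> M k N > 0"
    and arc: "\<And>k k'. k \<in> K \<Longrightarrow> k' \<in> K \<Longrightarrow> k \<noteq> k' \<Longrightarrow> convergent (\<lambda>N. arctan (M k N / M k' N))"
    using of unfolding ordered_family_def by auto
  define rel where "rel k k' \<longleftrightarrow> convergent (\<lambda>N. M k N / M k' N)" for k k'
  define S where "S = {k\<in>K. a k > 0 \<or> b k > 0}"
  have SK: "S \<subseteq> K" unfolding S_def by blast
  have Sne: "S \<noteq> {}"
  proof
    assume "S = {}"
    then have "\<forall>k\<in>K. a k = 0" unfolding S_def using a by (auto simp: order_le_less)
    then have "P 1 = 0" using P[of 1] by simp
    then show False using Pp[of 1] by simp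
  qed
  have "\<exists>m\<in>S. \<forall>k\<in>S. rel k m"
  proof (rule max_exists)
    show "finite S" using fin SK finite_subset by blast
    show "S \<noteq> {}" by (rule Sne)
    show "rel x y \<or> rel y x" if "x \<in> S" "y \<in> S" for x y
    proof (cases "x = y")
      case True
      then show ?thesis unfolding rel_def convergent_def
        using ratio_self[of "M x"] Mp that SK by blast
    next
      case False
      then show ?thesis unfolding rel_def
        using ratio_total[of "M x" "M y"] Mp arc[of x y] that SK by blast
    qed
    show "rel x z" if "x \<in> S" "y \<in> S" "z \<in> S" "rel x y" "rel y z" for x y z
      using ratio_trans[of "M y" "M x" "M z"] that Mp SK unfolding rel_def by blast
  qed
  then obtain m where m: "m \<in> S" "\<And>k. k \<in> S \<Longrightarrow> rel k m" by blast
  have mK: "m \<in> K" using m SK by blast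
  define L where "L k = lim (\<lambda>N. M k N / M m N)" for k
  have Lt: "(\<lambda>N. M k N / M m N) \<longlonglongrightarrow> L k" if "k \<in> S" for k
    using m(2)[OF that] unfolding rel_def L_def by (simp add: convergent_LIMSEQ_iff)
  have L0: "L k \<ge> 0" if "k \<in> S" for k
  proof (rule LIMSEQ_le_const[OF Lt[OF that]])
    show "\<exists>N. \<forall>n\<ge>N. 0 \<le> M k n / M m n"
      using Mp that SK mK by (intro exI[of _ 1]) (auto intro!: divide_nonneg_pos less_imp_le)
  qed
  have Lm: "L m = 1" using LIMSEQ_unique[OF Lt[OF m(1)] ratio_self[of "M m"]] Mp mK by blast
  have lim_gen: "(\<lambda>N. (\<Sum>k\<in>K. c k * M k N) / M m N) \<longlonglongrightarrow> (\<Sum>k\<in>K. c k * L k)"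
    if c: "\<And>k. k \<in> K \<Longrightarrow> c k \<noteq> 0 \<Longrightarrow> k \<in> S" for c
  proof -
    have "(\<lambda>N. \<Sum>k\<in>K. c k * (M k N / M m N)) \<longlonglongrightarrow> (\<Sum>k\<in>K. c k * L k)"
    proof (rule tendsto_sum)
      fix k assume k: "k \<in> K"
      show "(\<lambda>N. c k * (M k N / M m N)) \<longlonglongrightarrow> c k * L k"
      proof (cases "c k = 0")
        case True then show ?thesis by simp
      next
        case False then show ?thesis using Lt[OF c[OF k False]] by (intro tendsto_mult tendsto_const)
      qed
    qed
    then show ?thesis by (simp add: sum_divide_distrib)
  qed
  define p where "p = (\<Sum>k\<in>K. a k * L k)"
  define q where "q = (\<Sum>k\<in>K. b k * L k)"
  have pt: "(\<lambda>N. P N / M m N) \<longlonglongrightarrow> p"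
    unfolding p_def
    by (rule tendsto_ev1[OF lim_gen]) (use a S_def P in \<open>auto simp: order_le_less\<close>)
  have qt: "(\<lambda>N. Q N / M m N) \<longlonglongrightarrow> q"
    unfolding q_def
    by (rule tendsto_ev1[OF lim_gen]) (use b S_def Q in \<open>auto simp: order_le_less\<close>)
  have termnn: "c k * L k \<ge> 0" if "\<And>k. c k \<ge> 0" "\<And>k. k \<in> K \<Longrightarrow> c k \<noteq> 0 \<Longrightarrow> k \<in> S" "k \<in> K" for c k
  proof (cases "c k = 0")
    case True then show ?thesis by simp
  next
    case False then show ?thesis using that L0 by simp
  qed
  have p0: "p \<ge> 0" unfolding p_def
    by (rule sum_nonneg, rule termnn) (use a S_def in \<open>auto simp: order_le_less\<close>)
  have q0: "q \<ge> 0" unfolding q_def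
    by (rule sum_nonneg, rule termnn) (use b S_def in \<open>auto simp: order_le_less\<close>)
  have "(a m + b m) * L m \<le> (\<Sum>k\<in>K. (a k + b k) * L k)"
  proof (rule member_le_sum[OF mK _ fin])
    fix k assume "k \<in> K - {m}"
    then show "0 \<le> (a k + b k) * L k"
    proof (intro termnn)
      fix j show "0 \<le> a j + b j" using a[of j] b[of j] by simp
    next
      fix j assume "j \<in> K" "a j + b j \<noteq> 0"
      then show "j \<in> S" unfolding S_def using a[of j] b[of j] by auto
    qed (use \<open>k \<in> K - {m}\<close> in simp)
  qed
  moreover have "(\<Sum>k\<in>K. (a k + b k) * L k) = p + q"
    unfolding p_def q_def by (simp add: sum.distrib distrib_right)
  moreover have "a m + b m > 0" using m(1) a b unfolding S_def by (auto intro: add_pos_nonneg add_nonneg_pos)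
  ultimately have pq: "p + q > 0" using Lm by simp
  show ?thesis
  proof (cases "q > 0")
    case True
    have "(\<lambda>N. (P N / M m N) / (Q N / M m N)) \<longlonglongrightarrow> p / q"
      using pt qt True by (intro tendsto_divide) auto
    then have "(\<lambda>N. P N / Q N) \<longlonglongrightarrow> p / q"
      by (rule tendsto_ev1) (use Mp mK in \<open>simp add: less_imp_neq[symmetric]\<close>)
    then have "(\<lambda>N. arctan (P N / Q N)) \<longlonglongrightarrow> arctan (p / q)" by (rule tendsto_arctan)
    then show ?thesis unfolding convergent_def by blast
  next
    case False
    then have q00: "q = 0" using q0 by simp
    then have pp: "p > 0" using pq by simp
    have "(\<lambda>N. (Q N / M m N) / (P N / M m N)) \<longlonglongrightarrow> q / p"
      using pt qt pp by (intro tendsto_divide) auto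
    then have "(\<lambda>N. (Q N / M m N) / (P N / M m N)) \<longlonglongrightarrow> 0" using q00 by simp
    then have "(\<lambda>N. Q N / P N) \<longlonglongrightarrow> 0"
      by (rule tendsto_ev1) (use Mp mK in \<open>simp add: less_imp_neq[symmetric]\<close>)
    then have "(\<lambda>N. pi/2 - arctan (Q N / P N)) \<longlonglongrightarrow> pi/2 - arctan 0"
      by (intro tendsto_intros)
    then have "(\<lambda>N. arctan (P N / Q N)) \<longlonglongrightarrow> pi/2 - arctan 0"
    proof (rule tendsto_ev1)
      fix N :: nat assume N: "N \<ge> 1"
      then have "Q N / P N > 0" using Pp Qp by simp
      then show "pi/2 - arctan (Q N / P N) = arctan (P N / Q N)"
        using arctan_recip[of "Q N / P N"] by simp
    qed
    then show ?thesis unfolding convergent_def by blast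
  qed
qed



definition Kset :: "('a \<times> 'a) set \<Rightarrow> nat \<Rightarrow> ('a \<times> 'a \<Rightarrow> nat) set" where
  "Kset J n = {k. (\<forall>e. e \<notin> J \<longrightarrow> k e = 0) \<and> (\<Sum>e\<in>J. k e) = n}"

definition Mon :: "(nat \<Rightarrow> 'a \<Rightarrow> 'a \<Rightarrow> real) \<Rightarrow> ('a \<times> 'a) set \<Rightarrow> ('a \<times> 'a \<Rightarrow> nat) \<Rightarrow> nat \<Rightarrow> real" where
  "Mon R J k N = (\<Prod>e\<in>J. R N (fst e) (snd e) ^ k e)"

definition rep :: "(nat \<Rightarrow> 'a::finite \<Rightarrow> 'a \<Rightarrow> real) \<Rightarrow> ('a \<times> 'a) set \<Rightarrow> (nat \<Rightarrow> real) \<Rightarrow> bool" where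
  "rep R J p \<longleftrightarrow> (\<exists>a. (\<forall>k. a k \<ge> 0) \<and> (\<forall>N\<ge>1. p N = (\<Sum>k\<in>Kset J CARD('a). a k * Mon R J k N)))"

lemma rep_zero: "rep R J (\<lambda>N. 0)"
  unfolding rep_def by (rule exI[of _ "\<lambda>_. 0"]) simp

lemma rep_add: "rep R J p \<Longrightarrow> rep R J q \<Longrightarrow> rep R J (\<lambda>N. p N + q N)"
proof -
  assume "rep R J p" "rep R J q"
  then obtain a b where a: "\<forall>k. a k \<ge> 0" "\<forall>N\<ge>1. p N = (\<Sum>k\<in>Kset J CARD('a). a k * Mon R J k N)"
    and b: "\<forall>k. b k \<ge> 0" "\<forall>N\<ge>1. q N = (\<Sum>k\<in>Kset J CARD('a). b k * Mon R J k N)"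
    unfolding rep_def by blast
  show ?thesis unfolding rep_def
  proof (rule exI[of _ "\<lambda>k. a k + b k"], intro conjI allI impI)
    fix k show "a k + b k \<ge> 0" using a b by (simp add: add_nonneg_nonneg)
  next
    fix N :: nat assume "N \<ge> 1"
    then show "p N + q N = (\<Sum>k\<in>Kset J CARD('a). (a k + b k) * Mon R J k N)"
      using a b by (simp add: distrib_right sum.distrib)
  qed
qed

lemma rep_sum: "finite A \<Longrightarrow> (\<And>x. x \<in> A \<Longrightarrow> rep R J (f x)) \<Longrightarrow> rep R J (\<lambda>N. \<Sum>x\<in>A. f x N)"
proof (induction A rule: finite_induct)
  case empty then show ?case by (simp add: rep_zero)
next
  case (insert x F)
  have "rep R J (\<lambda>N. f x N + (\<Sum>y\<in>F. f y N))"
    by (rule rep_add) (use insert in auto)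
  then show ?case using insert by simp
qed

lemma rep_fun:
  fixes R :: "nat \<Rightarrow> 'a::finite \<Rightarrow> 'a \<Rightarrow> real" and g :: "'a \<Rightarrow> 'a"
  assumes nf: "\<And>v. g v \<noteq> v"
    and zero: "\<And>N u v. N \<ge> 1 \<Longrightarrow> u \<noteq> v \<Longrightarrow> (u, v) \<notin> J \<Longrightarrow> R N u v = 0"
    and finK: "finite (Kset J CARD('a))" and finJ: "finite J"
  shows "rep R J (\<lambda>N. \<Prod>v\<in>UNIV. R N v (g v))"
proof (cases "\<forall>v. (v, g v) \<in> J")
  case False
  then obtain v where v: "(v, g v) \<notin> J" by blast
  have "\<forall>N\<ge>1. (\<Prod>v\<in>UNIV. R N v (g v)) = 0"
  proof (intro allI impI)
    fix N :: nat assume "N \<ge> 1"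
    then have "R N v (g v) = 0" using zero[of N v "g v"] nf[of v] v by simp
    then show "(\<Prod>v\<in>UNIV. R N v (g v)) = 0" by (intro prod_zero) auto
  qed
  then show ?thesis unfolding rep_def by (intro exI[of _ "\<lambda>_. 0"]) simp
next
  case True
  define G where "G = range (\<lambda>v. (v, g v))"
  define kg where "kg e = (if g (fst e) = snd e then 1 else 0 :: nat)" for e :: "'a \<times> 'a"
  have GJ: "G \<subseteq> J" unfolding G_def using True by blast
  have Gc: "e \<in> G \<longleftrightarrow> g (fst e) = snd e" for e unfolding G_def by (cases e) auto
  have inj: "inj (\<lambda>v. (v, g v))" by (rule injI) simp
  have kgK: "kg \<in> Kset J CARD('a)"
  proof -
    have "kg e = 0" if "e \<notin> J" for e
    proof -
      have "e \<notin> G" using that GJ by blast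
      then show ?thesis unfolding kg_def using Gc[of e] by simp
    qed
    moreover have "(\<Sum>e\<in>J. kg e) = (\<Sum>e\<in>G. 1)"
      by (rule sum.mono_neutral_cong_right[OF finJ GJ]) (auto simp: kg_def Gc)
    moreover have "(\<Sum>e\<in>G. (1::nat)) = CARD('a)"
      unfolding G_def by (simp add: card_image[OF inj])
    ultimately show ?thesis unfolding Kset_def by simp
  qed
  have mon: "Mon R J kg N = (\<Prod>v\<in>UNIV. R N v (g v))" for N
  proof -
    have "Mon R J kg N = (\<Prod>e\<in>G. R N (fst e) (snd e))"
      unfolding Mon_def by (rule prod.mono_neutral_cong_right[OF finJ GJ]) (auto simp: kg_def Gc)
    also have "\<dots> = (\<Prod>v\<in>UNIV. R N v (g v))"
      unfolding G_def by (subst prod.reindex[OF inj]) simp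
    finally show ?thesis .
  qed
  show ?thesis unfolding rep_def
  proof (rule exI[of _ "\<lambda>k. if k = kg then 1 else 0"], intro conjI allI impI)
    fix k show "(if k = kg then 1 else 0 :: real) \<ge> 0" by simp
  next
    fix N :: nat assume "N \<ge> 1"
    have "(\<Sum>k\<in>Kset J CARD('a). (if k = kg then 1 else 0) * Mon R J k N) = Mon R J kg N"
    proof -
      have "(\<Sum>k\<in>Kset J CARD('a). (if k = kg then 1 else 0) * Mon R J k N)
          = (\<Sum>k\<in>Kset J CARD('a). if k = kg then Mon R J kg N else 0)"
        by (rule sum.cong) auto
      also have "\<dots> = Mon R J kg N" using finK kgK by (simp add: sum.delta')
      finally show ?thesis .
    qed
    then show "(\<Prod>v\<in>UNIV. R N v (g v)) = (\<Sum>k\<in>Kset J CARD('a). (if k = kg then 1 else 0) * Mon R J k N)"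
      using mon by simp
  qed
qed

lemma rep_num:
  fixes R :: "nat \<Rightarrow> 'a::finite \<Rightarrow> 'a \<Rightarrow> real"
  assumes xy: "x \<noteq> y"
    and zero: "\<And>N u v. N \<ge> 1 \<Longrightarrow> u \<noteq> v \<Longrightarrow> (u, v) \<notin> J \<Longrightarrow> R N u v = 0"
    and finK: "finite (Kset J CARD('a))" and finJ: "finite J"
  shows "rep R J (\<lambda>N. W (R N) x * R N x y)"
proof -
  have "rep R J (\<lambda>N. \<Sum>f\<in>trees x. \<Prod>v\<in>UNIV. R N v ((f(x:=y)) v))"
  proof (rule rep_sum[OF finite_trees])
    fix f assume f: "f \<in> trees x"
    show "rep R J (\<lambda>N. \<Prod>v\<in>UNIV. R N v ((f(x:=y)) v))"
    proof (rule rep_fun[OF _ zero finK finJ])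
      fix v show "(f(x:=y)) v \<noteq> v"
        using tree_no_fix[OF f, of v] xy by (cases "v = x") auto
    qed auto
  qed
  then show ?thesis by (simp add: W_mult)
qed




theorem corollary3p5:
  fixes R :: "nat \<Rightarrow> 'a::finite \<Rightarrow> 'a \<Rightarrow> real" and \<mu> :: "nat \<Rightarrow> 'a \<Rightarrow> real"
  assumes rates: "\<And>N. N \<ge> 1 \<Longrightarrow> rate_matrix (R N)"
    and irred: "\<And>N. N \<ge> 1 \<Longrightarrow> irreducible_chain (R N)"
    and inv: "\<And>N. N \<ge> 1 \<Longrightarrow> invariant_prob (R N) (\<mu> N)"
    and uniq: "\<And>N \<nu>. N \<ge> 1 \<Longrightarrow> invariant_prob (R N) \<nu> \<Longrightarrow> \<nu> = \<mu> N"
    and A: "assumption_A R"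
  shows "ordered_family (sym_jumps R) (\<lambda>(x, y) N. sym_cond R \<mu> N x y)"
proof -
  define J where "J = jumps R"
  define n where "n = CARD('a)"
  have A1: "\<And>x y. x \<noteq> y \<Longrightarrow> (\<forall>N\<ge>1. R N x y = 0) \<or> (\<forall>N\<ge>1. R N x y > 0)"
    using A unfolding assumption_A_def by blast
  have n1: "n \<ge> 1" unfolding n_def using finite_UNIV_card_ge_0[where 'a='a] by simp
  have MonE: "Mon R J = (\<lambda>k N. \<Prod>e\<in>jumps R. R N (fst e) (snd e) ^ k e)"
    by (intro ext) (simp add: Mon_def J_def)
  have ofK: "ordered_family (Kset J n) (Mon R J)"
    using A n1 unfolding assumption_A_def MonE unfolding Kset_def J_def by blast
  have finK: "finite (Kset J CARD('a))" using ofK unfolding ordered_family_def n_def by blast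
  have finJ: "finite J" by simp
  have zero: "R N u v = 0" if "N \<ge> 1" "u \<noteq> v" "(u, v) \<notin> J" for N u v
  proof -
    have "\<not> R 1 u v > 0" using that unfolding J_def jumps_def by auto
    then show ?thesis using A1[OF that(2)] that(1) by auto
  qed
  have posJ: "R N u v > 0" if "N \<ge> 1" "(u, v) \<in> J" for N u v
  proof -
    have "u \<noteq> v" "R 1 u v > 0" using that unfolding J_def jumps_def by auto
    then show ?thesis using A1[of u v] that(1) by force
  qed
  have nn: "R N u v \<ge> 0" if "N \<ge> 1" "u \<noteq> v" for N u v
    using rates[OF that(1)] that(2) unfolding rate_matrix_def by blast
  define S where "S N = (\<Sum>x\<in>UNIV. W (R N) x)" for N
  have Wp: "W (R N) x > 0" if "N \<ge> 1" for N x
    by (rule W_pos) (use nn irred that in auto)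
  have Sp: "S N > 0" if "N \<ge> 1" for N
    unfolding S_def by (rule sum_pos) (use Wp that in auto)
  have muN: "\<mu> N = (\<lambda>x. W (R N) x / S N)" if N: "N \<ge> 1" for N
  proof (rule sym, rule uniq[OF N])
    show "invariant_prob (R N) (\<lambda>x. W (R N) x / S N)"
      unfolding invariant_prob_def
    proof (intro conjI allI)
      fix x show "0 \<le> W (R N) x / S N" using Wp[OF N] Sp[OF N] by (simp add: less_imp_le)
    next
      show "(\<Sum>x\<in>UNIV. W (R N) x / S N) = 1"
        using Sp[OF N] by (simp add: sum_divide_distrib[symmetric] S_def)
    next
      fix y
      have "(\<Sum>x\<in>UNIV - {y}. W (R N) x / S N * R N x y) = (\<Sum>x\<in>UNIV - {y}. W (R N) x * R N x y) / S N"
        by (simp add: sum_divide_distrib)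
      also have "\<dots> = W (R N) y * (\<Sum>z\<in>UNIV - {y}. R N y z) / S N" by (simp add: balance)
      finally show "(\<Sum>x\<in>UNIV - {y}. W (R N) x / S N * R N x y) = W (R N) y / S N * (\<Sum>z\<in>UNIV - {y}. R N y z)"
        by simp
    qed
  qed
  define num where "num x y N = W (R N) x * R N x y + W (R N) y * R N y x" for x y N
  have symeq: "sym_cond R \<mu> N x y = num x y N / (2 * S N)" if "N \<ge> 1" for N x y
    using Sp[OF that] unfolding sym_cond_def muN[OF that] num_def by (simp add: field_simps)
  have nump: "num x y N > 0" if "(x, y) \<in> sym_jumps R" "N \<ge> 1" for x y N
  proof -
    have xy: "x \<noteq> y" "(x, y) \<in> J \<or> (y, x) \<in> J" using that unfolding sym_jumps_def J_def by auto
    have "W (R N) x * R N x y \<ge> 0" "W (R N) y * R N y x \<ge> 0"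
      using Wp[OF that(2)] nn[OF that(2)] xy(1) by (simp_all add: less_imp_le)
    moreover have "W (R N) x * R N x y > 0 \<or> W (R N) y * R N y x > 0"
      using xy(2) posJ[OF that(2)] Wp[OF that(2)] by auto
    ultimately show ?thesis unfolding num_def by linarith
  qed
  have numrep: "\<exists>a. (\<forall>k. a k \<ge> 0) \<and> (\<forall>N\<ge>1. num x y N = (\<Sum>k\<in>Kset J n. a k * Mon R J k N))"
    if "x \<noteq> y" for x y
  proof -
    have "rep R J (\<lambda>N. W (R N) x * R N x y + W (R N) y * R N y x)"
      by (rule rep_add; rule rep_num[OF _ zero finK finJ]) (use that in auto)
    then show ?thesis unfolding rep_def num_def n_def by blast
  qed
  show ?thesis
    unfolding ordered_family_def
  proof (intro conjI ballI allI impI)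
    show "finite (sym_jumps R)" by simp
  next
    fix r N assume r: "r \<in> sym_jumps R" and N: "(1::nat) \<le> N"
    obtain x y where rxy: "r = (x, y)" by (cases r)
    show "0 < (case r of (x, y) \<Rightarrow> \<lambda>N. sym_cond R \<mu> N x y) N"
      using nump[of x y N] r N Sp[OF N] unfolding rxy by (simp add: symeq[OF N])
  next
    fix r s assume r: "r \<in> sym_jumps R" and s: "s \<in> sym_jumps R" and "r \<noteq> s"
    obtain x y where rxy: "r = (x, y)" by (cases r)
    obtain x' y' where sxy: "s = (x', y')" by (cases s)
    have xy: "x \<noteq> y" "x' \<noteq> y'" using r s unfolding rxy sxy sym_jumps_def by auto
    obtain a where a: "\<forall>k. a k \<ge> 0" "\<forall>N\<ge>1. num x y N = (\<Sum>k\<in>Kset J n. a k * Mon R J k N)"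
      using numrep[OF xy(1)] by blast
    obtain b where b: "\<forall>k. b k \<ge> 0" "\<forall>N\<ge>1. num x' y' N = (\<Sum>k\<in>Kset J n. b k * Mon R J k N)"
      using numrep[OF xy(2)] by blast
    have "convergent (\<lambda>N. arctan (num x y N / num x' y' N))"
    proof (rule ord_ratio[OF ofK, of a b])
      show "\<And>N. N \<ge> 1 \<Longrightarrow> num x y N > 0" using nump r rxy by blast
      show "\<And>N. N \<ge> 1 \<Longrightarrow> num x' y' N > 0" using nump s sxy by blast
    qed (use a b in blast)+
    then show "convergent (\<lambda>N. arctan ((case r of (x, y) \<Rightarrow> \<lambda>N. sym_cond R \<mu> N x y) N /
                                          (case s of (x, y) \<Rightarrow> \<lambda>N. sym_cond R \<mu> N x y) N))"
    proof (rule conv_ev1)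
      fix N :: nat assume N: "N \<ge> 1"
      show "arctan (num x y N / num x' y' N) =
            arctan ((case r of (x, y) \<Rightarrow> \<lambda>N. sym_cond R \<mu> N x y) N /
                    (case s of (x, y) \<Rightarrow> \<lambda>N. sym_cond R \<mu> N x y) N)"
        using Sp[OF N] unfolding rxy sxy by (simp add: symeq[OF N])
    qed
  qed
qed


end
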